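(* Fix $j\in\{1,\ldots,K\}$ and $\Gamma^c_j\in\mathbb{R}$. For every $N\ge 1$, the circulation of $\psi^*_{N,j}$ around $L_j$ equals $\Gamma^c_j\frac{2K-1}{K}$, and its circulation around $L_k$ equals $-\Gamma^c_j/K$ for every $k\ne j$.
   Context: Let $K\ge 2$. Let $L_k=\{z:|z-c_k|=R_k\}$, $k=1,\dots,K$, be circles in $\mathbb{C}$ with pairwise disjoint closed disks, $\operatorname{int}L_k$ the open disk, and $T_k(z)=c_k+\frac{R_k^2}{\bar z-\bar c_k}$ the inversion in $L_k$, with $T_k(c_k)=\infty$, $T_k(\infty)=c_k$. For $M\ge0$, the level-$M$ points of $c_j$ are the multiset $T_{i_1}\circ\cdots\circ T_{i_M}(c_j)$ over words $(i_1,\ldots,i_M)\in\{1,\ldots,K\}^M$ with $i_k\ne i_{k+1}$ (level 0 is $c_j$; the level-1 point $T_j(c_j)=\infty$ is one of them). Define $\psi_{N,j}(z)=-\frac{\Gamma^c_j}{2\pi}\sum_{M=0}^{N}(-1)^M\sum_{\zeta\in\text{level }M,\ \zeta\ne\infty}\log|z-\zeta|$ (the term for $\zeta=\infty$ is omitted) and $\psi^*_{N,j}=\frac{(K-1)\psi_{N,j}+\psi_{N+1,j}}{K}$. Circulation: for a finite sum $\psi(z)=-\frac{1}{2\pi}\sum_k\Gamma_k\log|z-\zeta_k|$ with no $\zeta_k$ on $L$, the circulation around a circle $L$ is the sum of $\Gamma_k$ over $\zeta_k$ inside $L$ (equivalently $-\oint_{L}\partial\psi/\partial n\,ds$, counterclockwise,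 outward normal). *)

theory Defs
  imports "HOL-Analysis.Analysis" "HOL-Library.Multiset"
begin

text \<open>Extended complex plane: None represents the point at infinity.\<close>

definition inversion :: "(nat \<Rightarrow> complex) \<Rightarrow> (nat \<Rightarrow> real) \<Rightarrow> nat \<Rightarrow> complex option \<Rightarrow> complex option" where
  "inversion c R k p = (case p of
      None \<Rightarrow> Some (c k)
    | Some z \<Rightarrow> (if z = c k then None else Some (c k + complex_of_real ((R k)^2) / cnj (z - c k))))"

definition words :: "nat \<Rightarrow> nat \<Rightarrow> nat list set" where
  "words K M = {w. length w = M \<and> set w \<subseteq> {1..K} \<and> (\<forall>i. Suc i < length w \<longrightarrow> w ! i \<noteq> w ! Suc i)}"

definition level_points :: "nat \<Rightarrow> (nat \<Rightarrow> complex) \<Rightarrow> (nat \<Rightarrow> real) \<Rightarrow> nat \<Rightarrow> nat \<Rightarrow> complex option multiset" where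
  "level_points K c R j M =
     image_mset (\<lambda>w. foldr (inversion c R) w (Some (c j))) (mset_set (words K M))"

text \<open>A finite point-vortex sum psi(z) = -(1/2pi) sum Gamma_k log|z - zeta_k| is represented by
  its multiset of charges (zeta_k, Gamma_k).\<close>

definition potential :: "(complex \<times> real) multiset \<Rightarrow> complex \<Rightarrow> real" where
  "potential Q z = - (1 / (2*pi)) * (\<Sum>q\<in>#Q. snd q * ln (cmod (z - fst q)))"

definition psi_charges :: "nat \<Rightarrow> (nat \<Rightarrow> complex) \<Rightarrow> (nat \<Rightarrow> real) \<Rightarrow> real \<Rightarrow> nat \<Rightarrow> nat \<Rightarrow> (complex \<times> real) multiset" where
  "psi_charges K c R \<Gamma> N j =
     (\<Sum>M\<in>{0..N}. image_mset (\<lambda>p. (the p, \<Gamma> * (-1)^M))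
                    (filter_mset (\<lambda>p. p \<noteq> None) (level_points K c R j M)))"

definition scale_charges :: "real \<Rightarrow> (complex \<times> real) multiset \<Rightarrow> (complex \<times> real) multiset" where
  "scale_charges a Q = image_mset (\<lambda>q. (fst q, a * snd q)) Q"

definition psi_star_charges :: "nat \<Rightarrow> (nat \<Rightarrow> complex) \<Rightarrow> (nat \<Rightarrow> real) \<Rightarrow> real \<Rightarrow> nat \<Rightarrow> nat \<Rightarrow> (complex \<times> real) multiset" where
  "psi_star_charges K c R \<Gamma> N j =
     scale_charges ((real K - 1) / real K) (psi_charges K c R \<Gamma> N j)
   + scale_charges (1 / real K) (psi_charges K c R \<Gamma> (Suc N) j)"

text \<open>Circulation of a finite point-vortex sum around the circle |z - a| = r:
  total weight of the charges strictly inside the circle.\<close>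

definition circulation :: "(complex \<times> real) multiset \<Rightarrow> complex \<Rightarrow> real \<Rightarrow> real" where
  "circulation Q a r = (\<Sum>q\<in>#filter_mset (\<lambda>q. cmod (fst q - a) < r) Q. snd q)"

end

theory Submission
  imports Defs
begin

lemma finite_words: "finite (words K M)"
proof -
  have "words K M \<subseteq> {xs. set xs \<subseteq> {1..K} \<and> length xs = M}" by (auto simp: words_def)
  thus ?thesis using finite_lists_length_eq[of "{1..K}" M] finite_subset by blast
qed

lemma words_0: "words K 0 = {[]}" by (auto simp: words_def)

lemma words_Cons: "(k # v \<in> words K (Suc n)) \<longleftrightarrow> k \<in> {1..K} \<and> v \<in> words K n \<and> (v \<noteq> [] \<longrightarrow> hd v \<noteq> k)"
proof
  assume h: "k # v \<in> words K (Suc n)"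
  have a: "\<forall>i. Suc i < length (k#v) \<longrightarrow> (k#v) ! i \<noteq> (k#v) ! Suc i" using h by (simp add: words_def)
  have "\<forall>i. Suc i < length v \<longrightarrow> v ! i \<noteq> v ! Suc i"
  proof (intro allI impI)
    fix i assume "Suc i < length v" thus "v ! i \<noteq> v ! Suc i" using a[rule_format, of "Suc i"] by simp
  qed
  moreover have "v \<noteq> [] \<longrightarrow> hd v \<noteq> k" using a[rule_format, of 0] by (cases v) auto
  ultimately show "k \<in> {1..K} \<and> v \<in> words K n \<and> (v \<noteq> [] \<longrightarrow> hd v \<noteq> k)" using h by (auto simp: words_def)
next
  assume h: "k \<in> {1..K} \<and> v \<in> words K n \<and> (v \<noteq> [] \<longrightarrow> hd v \<noteq> k)"
  have "\<forall>i. Suc i < length (k#v) \<longrightarrow> (k#v) ! i \<noteq> (k#v) ! Suc i"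
  proof (intro allI impI)
    fix i assume i: "Suc i < length (k#v)"
    show "(k#v) ! i \<noteq> (k#v) ! Suc i"
    proof (cases i)
      case 0 thus ?thesis using h i by (cases v) auto
    next
      case (Suc i') thus ?thesis using h i by (auto simp: words_def)
    qed
  qed
  thus "k # v \<in> words K (Suc n)" using h by (auto simp: words_def)
qed

lemma words_Suc_ne: "w \<in> words K (Suc n) \<Longrightarrow> \<exists>k v. w = k # v" by (cases w) (auto simp: words_def)

lemma card_hd:
  assumes "k \<in> {1..K}" shows "card {w \<in> words K (Suc m). hd w = k} = (K - 1)^m"
  using assms
proof (induction m arbitrary: k)
  case 0
  have "{w \<in> words K (Suc 0). hd w = k} = {[k]}"
  proof
    show "{w \<in> words K (Suc 0). hd w = k} \<subseteq> {[k]}"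
      by (auto simp: words_def length_Suc_conv)
    show "{[k]} \<subseteq> {w \<in> words K (Suc 0). hd w = k}" using 0 by (auto simp: words_def)
  qed
  thus ?case by simp
next
  case (Suc m)
  have eq: "{w \<in> words K (Suc (Suc m)). hd w = k} = (\<lambda>v. k # v) ` (\<Union>b\<in>{1..K}-{k}. {v \<in> words K (Suc m). hd v = b})"
  proof
    show "{w \<in> words K (Suc (Suc m)). hd w = k} \<subseteq> (\<lambda>v. k # v) ` (\<Union>b\<in>{1..K}-{k}. {v \<in> words K (Suc m). hd v = b})"
    proof
      fix w assume w: "w \<in> {w \<in> words K (Suc (Suc m)). hd w = k}"
      then obtain a v where av: "w = a # v" using words_Suc_ne by blast
      with w have "a = k" "k \<in> {1..K}" "v \<in> words K (Suc m)" "v \<noteq> [] \<longrightarrow> hd v \<noteq> k"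
        using words_Cons by auto
      moreover then obtain b u where "v = b # u" using words_Suc_ne by blast
      moreover have "b \<in> {1..K}" using calculation words_Cons by auto
      ultimately show "w \<in> (\<lambda>v. k # v) ` (\<Union>b\<in>{1..K}-{k}. {v \<in> words K (Suc m). hd v = b})"
        using av by auto
    qed
    show "(\<lambda>v. k # v) ` (\<Union>b\<in>{1..K}-{k}. {v \<in> words K (Suc m). hd v = b}) \<subseteq> {w \<in> words K (Suc (Suc m)). hd w = k}"
      using Suc.prems by (auto simp: words_Cons)
  qed
  have "card {w \<in> words K (Suc (Suc m)). hd w = k} = card (\<Union>b\<in>{1..K}-{k}. {v \<in> words K (Suc m). hd v = b})"
    unfolding eq by (rule card_image) (simp add: inj_on_def)
  also have "\<dots> = (\<Sum>b\<in>{1..K}-{k}. card {v \<in> words K (Suc m). hd v = b})"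
    by (rule card_UN_disjoint) (auto intro: finite_subset[OF _ finite_words])
  also have "\<dots> = (\<Sum>b\<in>{1..K}-{k}. (K-1)^m)"
    using Suc.IH by (intro sum.cong) auto
  also have "\<dots> = (K - 1) * (K-1)^m" using Suc.prems by simp
  finally show ?case by simp
qed

lemma circ_if: "circulation Q a r = (\<Sum>q\<in>#Q. if cmod (fst q - a) < r then snd q else 0)"
  unfolding circulation_def by (induction Q) auto

lemma circ_plus: "circulation (A + B) a r = circulation A a r + circulation B a r"
  by (simp add: circ_if)

lemma circ_sum: "finite S \<Longrightarrow> circulation (\<Sum>M\<in>S. Q M) a r = (\<Sum>M\<in>S. circulation (Q M) a r)"
  by (induction S rule: finite_induct) (auto simp: circ_plus circulation_def)

lemma circ_level: "finite W \<Longrightarrow>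
  circulation (image_mset (\<lambda>p. (the p, x)) (filter_mset (\<lambda>p. p \<noteq> None) (image_mset f (mset_set W)))) a r
   = x * real (card {w \<in> W. f w \<noteq> None \<and> cmod (the (f w) - a) < r})"
  unfolding circulation_def
  by (simp add: filter_mset_image_mset filter_mset_mset_set image_mset.compositionality o_def Collect_conj_eq
      flip: sum_unfold_sum_mset)

lemma circ_scale: "circulation (scale_charges x Q) a r = x * circulation Q a r"
  unfolding circ_if scale_charges_def by (induction Q) (auto simp: algebra_simps)

lemma inv_step:
  assumes "R a > 0" "R a < dist (c a) z"
  shows "\<exists>z'. inversion c R a (Some z) = Some z' \<and> dist (c a) z' < R a"
proof -
  have ne: "z \<noteq> c a" using assms by auto
  have d: "cmod (z - c a) > R a" using assms by (simp add: dist_norm norm_minus_commute)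
  have "dist (c a) (c a + complex_of_real ((R a)^2) / cnj (z - c a)) = (R a)^2 / cmod (z - c a)"
    by (simp add: dist_norm norm_divide norm_power del: complex_cnj_diff)
  also have "\<dots> < R a" using d assms(1) by (simp add: divide_less_eq power2_eq_square)
  finally show ?thesis using ne by (auto simp: inversion_def)
qed

lemma outside:
  assumes disj: "\<And>k l. k \<in> {1..K} \<Longrightarrow> l \<in> {1..K} \<Longrightarrow> k \<noteq> l \<Longrightarrow> cball (c k) (R k) \<inter> cball (c l) (R l) = {}"
    and "a \<in> {1..K}" "b \<in> {1..K}" "a \<noteq> b" "dist (c b) z \<le> R b"
  shows "R a < dist (c a) z"
proof (rule ccontr)
  assume "\<not> R a < dist (c a) z"
  hence "z \<in> cball (c a) (R a)" by (simp add: mem_cball)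
  moreover have "z \<in> cball (c b) (R b)" using assms by (simp add: mem_cball)
  ultimately have "z \<in> cball (c a) (R a) \<inter> cball (c b) (R b)" by blast
  thus False using disj[OF assms(2,3,4)] by blast
qed

lemma loc:
  assumes Rpos: "\<And>k. k \<in> {1..K} \<Longrightarrow> R k > 0"
    and disj: "\<And>k l. k \<in> {1..K} \<Longrightarrow> l \<in> {1..K} \<Longrightarrow> k \<noteq> l \<Longrightarrow> cball (c k) (R k) \<inter> cball (c l) (R l) = {}"
    and j: "j \<in> {1..K}"
  shows "w \<in> words K (length w) \<Longrightarrow> w \<noteq> [] \<Longrightarrow> w \<noteq> [j] \<Longrightarrow>
     \<exists>z. foldr (inversion c R) w (Some (c j)) = Some z \<and> dist (c (hd w)) z < R (hd w)"
proof (induction w)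
  case Nil thus ?case by simp
next
  case (Cons a v)
  have a: "a \<in> {1..K}" and v: "v \<in> words K (length v)" and hv: "v \<noteq> [] \<longrightarrow> hd v \<noteq> a"
    using Cons.prems(1) words_Cons[of a v K "length v"] by auto
  show ?case
  proof (cases "v = []")
    case True
    hence "a \<noteq> j" using Cons.prems by auto
    hence "R a < dist (c a) (c j)" using outside[OF disj a j] Rpos j by fastforce
    thus ?thesis using inv_step[of R a c "c j"] Rpos a True by auto
  next
    case False
    show ?thesis
    proof (cases "v = [j]")
      case True
      hence "foldr (inversion c R) (a # v) (Some (c j)) = Some (c a)" by (simp add: inversion_def)
      thus ?thesis using Rpos a by auto
    next
      case vj: False
      obtain z where z: "foldr (inversion c R) v (Some (c j)) = Some z" "dist (c (hd v)) z < R (hd v)"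
        using Cons.IH v False vj by blast
      have hb: "hd v \<in> {1..K}" using v False by (cases v) (auto simp: words_def)
      have "R a < dist (c a) z" using outside[OF disj a hb] hv False z(2) by fastforce
      thus ?thesis using inv_step[of R a c z] Rpos a z(1) by auto
    qed
  qed
qed

lemma count_level:
  assumes Rpos: "\<And>k. k \<in> {1..K} \<Longrightarrow> R k > 0"
    and disj: "\<And>k l. k \<in> {1..K} \<Longrightarrow> l \<in> {1..K} \<Longrightarrow> k \<noteq> l \<Longrightarrow> cball (c k) (R k) \<inter> cball (c l) (R l) = {}"
    and j: "j \<in> {1..K}" and k: "k \<in> {1..K}"
  shows "card {w \<in> words K M. foldr (inversion c R) w (Some (c j)) \<noteq> None
            \<and> cmod (the (foldr (inversion c R) w (Some (c j))) - c k) < R k}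
       = (if M = 0 then (if k = j then 1 else 0) else (K-1)^(M-1) - (if M = 1 \<and> k = j then 1 else 0))"
proof (cases M)
  case 0
  have "k \<noteq> j \<Longrightarrow> \<not> cmod (c j - c k) < R k"
    using outside[OF disj k j, where z="c j"] Rpos j by (force simp: dist_norm norm_minus_commute)
  moreover have "\<And>Q. {w \<in> words K M. Q w} = (if Q [] then {[]} else {})" using 0 words_0 by auto
  ultimately show ?thesis using 0 Rpos k by auto
next
  case (Suc m)
  let ?f = "\<lambda>w. foldr (inversion c R) w (Some (c j))"
  have eq: "{w \<in> words K M. ?f w \<noteq> None \<and> cmod (the (?f w) - c k) < R k}
        = {w \<in> words K (Suc m). hd w = k} - {[j]}"
  proof (intro set_eqI iffI)
    fix w assume w: "w \<in> {w \<in> words K M. ?f w \<noteq> None \<and> cmod (the (?f w) - c k) < R k}"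
    hence wj: "w \<noteq> [j]" by (auto simp: inversion_def)
    have wn: "w \<noteq> []" and wl: "w \<in> words K (length w)" using w Suc by (auto simp: words_def)
    obtain z where z: "?f w = Some z" "dist (c (hd w)) z < R (hd w)" using loc[where K=K and R=R and c=c and j=j, OF Rpos disj j wl wn wj] by blast
    have hb: "hd w \<in> {1..K}" using wl wn by (cases w) (auto simp: words_def)
    have "hd w = k"
    proof (rule ccontr)
      assume "hd w \<noteq> k"
      hence "R k < dist (c k) z" using outside[OF disj k hb] z(2) by fastforce
      thus False using w z(1) by (simp add: dist_norm norm_minus_commute)
    qed
    thus "w \<in> {w \<in> words K (Suc m). hd w = k} - {[j]}" using w wj Suc by auto
  next
    fix w assume w: "w \<in> {w \<in> words K (Suc m). hd w = k} - {[j]}"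
    hence wj: "w \<noteq> [j]" and wn: "w \<noteq> []" and wl: "w \<in> words K (length w)" by (auto simp: words_def)
    obtain z where z: "?f w = Some z" "dist (c (hd w)) z < R (hd w)" using loc[where K=K and R=R and c=c and j=j, OF Rpos disj j wl wn wj] by blast
    thus "w \<in> {w \<in> words K M. ?f w \<noteq> None \<and> cmod (the (?f w) - c k) < R k}"
      using w Suc by (auto simp: dist_norm norm_minus_commute)
  qed
  have fin: "finite {w \<in> words K (Suc m). hd w = k}" using finite_words by simp
  show ?thesis
  proof (cases "m = 0 \<and> k = j")
    case True
    have jin: "[j] \<in> {w \<in> words K (Suc m). hd w = k}" using True j by (auto simp: words_def)
    show ?thesis unfolding eq using card_Diff_singleton[OF jin] card_hd[OF k, of m] Suc True by simp
  next
    case False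
    have "[j] \<notin> {w \<in> words K (Suc m). hd w = k}" using False by (auto simp: words_def)
    hence "{w \<in> words K (Suc m). hd w = k} - {[j]} = {w \<in> words K (Suc m). hd w = k}" by blast
    thus ?thesis unfolding eq using card_hd[OF k, of m] Suc False by auto
  qed
qed

lemma closed:
  fixes Kr e :: real and g :: "nat \<Rightarrow> real"
  assumes "g 0 = e" "g 1 = -(1 - e)" "\<And>m. m \<ge> 1 \<Longrightarrow> g (Suc m) = (-1)^(Suc m) * (Kr-1)^m"
    and "N \<ge> 1"
  shows "Kr * (\<Sum>M\<in>{0..N}. g M) = Kr*2*e + (1-Kr)^N - 1"
  using assms(4)
proof (induction N rule: dec_induct)
  case base
  have h1: "(\<Sum>M\<in>{0..1}. g M) = g 0 + g 1" by (simp add: numeral_2_eq_2)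
  have h2: "g 0 + g 1 = 2*e - 1" using assms(1,2) by simp
  show ?case by (simp only: h1 h2) (simp add: algebra_simps)
next
  case (step n)
  have p: "(1-Kr)^n = (-1)^n * (Kr-1)^n" by (simp flip: power_mult_distrib)
  have "Kr * (\<Sum>M\<in>{0..Suc n}. g M) = Kr * (\<Sum>M\<in>{0..n}. g M) + Kr * g (Suc n)"
    by (simp add: algebra_simps)
  also have "\<dots> = Kr*2*e + (1-Kr)^Suc n - 1" using step assms(3)[of n] p by (simp add: algebra_simps)
  finally show ?case .
qed


lemma final_alg:
  fixes Kr T1 T2 e x G :: real
  assumes "Kr > 0" "Kr*T1 = Kr*2*e + x - 1" "Kr*T2 = Kr*2*e + (1-Kr)*x - 1"
  shows "(Kr-1)/Kr*(G*T1) + 1/Kr*(G*T2) = G*(2*e - 1/Kr)"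
proof -
  have t1: "T1 = (Kr*2*e + x - 1)/Kr" using assms by (simp add: field_simps)
  have t2: "T2 = (Kr*2*e + (1-Kr)*x - 1)/Kr" using assms by (simp add: field_simps)
  show ?thesis unfolding t1 t2 using assms(1) by (simp add: field_simps)
qed

theorem mainTheorem8:
  fixes K N j :: nat and c :: "nat \<Rightarrow> complex" and R :: "nat \<Rightarrow> real" and \<Gamma> :: real
  assumes "K \<ge> 2"
    and "\<And>k. k \<in> {1..K} \<Longrightarrow> R k > 0"
    and "\<And>k l. k \<in> {1..K} \<Longrightarrow> l \<in> {1..K} \<Longrightarrow> k \<noteq> l \<Longrightarrow> cball (c k) (R k) \<inter> cball (c l) (R l) = {}"
    and "j \<in> {1..K}"
    and "N \<ge> 1"
  shows "circulation (psi_star_charges K c R \<Gamma> N j) (c j) (R j) = \<Gamma> * (2 * real K - 1) / real K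
       \<and> (\<forall>k\<in>{1..K}. k \<noteq> j \<longrightarrow> circulation (psi_star_charges K c R \<Gamma> N j) (c k) (R k) = - \<Gamma> / real K)"
proof -
  define f where "f = (\<lambda>w. foldr (inversion c R) w (Some (c j)))"
  define cnt where "cnt = (\<lambda>k M. card {w \<in> words K M. f w \<noteq> None \<and> cmod (the (f w) - c k) < R k})"
  have circ_psi: "circulation (psi_charges K c R \<Gamma> n j) (c k) (R k) = \<Gamma> * (\<Sum>M\<in>{0..n}. (-1)^M * real (cnt k M))" for k n
    unfolding psi_charges_def circ_sum[OF finite_atLeastAtMost] level_points_def circ_level[OF finite_words]
    by (simp add:  circ_level[OF finite_words] sum_distrib_left cnt_def f_def mult.assoc)
  have closedk: "real K * (\<Sum>M\<in>{0..n}. (-1)^M * real (cnt k M)) = real K*2*(if k = j then 1 else 0) + (1-real K)^n - 1"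
    if k: "k \<in> {1..K}" and n: "n \<ge> 1" for k n
  proof (rule closed[OF _ _ _ n])
    have cl: "cnt k M = (if M = 0 then (if k = j then 1 else 0) else (K-1)^(M-1) - (if M = 1 \<and> k = j then 1 else 0))" for M
      unfolding cnt_def f_def by (rule count_level[OF assms(2,3,4) k])
    show "(-1)^0 * real (cnt k 0) = (if k = j then 1 else 0)" using cl[of 0] by simp
    show "(-1)^1 * real (cnt k 1) = - (1 - (if k = j then 1 else 0))" using cl[of 1] by auto
    show "(-1)^Suc m * real (cnt k (Suc m)) = (-1)^Suc m * (real K - 1)^m" if "m \<ge> 1" for m
      using cl[of "Suc m"] that assms(1) by (simp add: of_nat_diff)
  qed
  have res: "circulation (psi_star_charges K c R \<Gamma> N j) (c k) (R k) = \<Gamma> * (2*(if k = j then 1 else 0) - 1/real K)"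
    if k: "k \<in> {1..K}" for k
  proof -
    have A: "real K * (\<Sum>M\<in>{0..N}. (-1)^M * real (cnt k M)) = real K*2*(if k = j then 1 else 0) + (1-real K)^N - 1"
      by (rule closedk[OF k assms(5)])
    have B: "real K * (\<Sum>M\<in>{0..Suc N}. (-1)^M * real (cnt k M)) = real K*2*(if k = j then 1 else 0) + (1-real K)*(1-real K)^N - 1"
      using closedk[OF k, of "Suc N"] by simp
    show ?thesis
      unfolding psi_star_charges_def circ_plus circ_scale circ_psi
      by (rule final_alg[OF _ A B]) (use assms(1) in simp)
  qed
  show ?thesis
  proof
    show "circulation (psi_star_charges K c R \<Gamma> N j) (c j) (R j) = \<Gamma> * (2 * real K - 1) / real K"
      using res[OF assms(4)] assms(1) by (simp add: field_simps)
    show "\<forall>k\<in>{1..K}. k \<noteq> j \<longrightarrow> circulation (psi_star_charges K c R \<Gamma> N j) (c k) (R k) = - \<Gamma> / real K"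
      using res by simp
  qed
qed

end
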